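(* Let $f:\mathbb{R}^n\to(-\infty,+\infty]$ be proper, lower semicontinuous and prox-bounded with threshold $\lambda_f>0$, and let $0<\lambda<\lambda_f$. Then the following are equivalent: (a) $P_\lambda f$ is firmly nonexpansive on $\mathbb{R}^n$; (b) $\partial_p^\lambda f$ is monotone; (c) $\partial_p^\lambda f$ is maximally monotone; (d) $e_\lambda f$ is convex on $\mathbb{R}^n$; (e) $f$ is convex on $\mathbb{R}^n$.
   Context: $e_\lambda f(x):=\inf_{y}\{f(y)+\frac1{2\lambda}\|y-x\|^2\}$, $P_\lambda f(x):=\operatorname{argmin}_y\{f(y)+\frac1{2\lambda}\|y-x\|^2\}$ (set-valued; firm nonexpansiveness entails single-valuedness: $\|Tx-Ty\|^2\le\langle x-y,Tx-Ty\rangle$). Prox-bounded: $e_\lambda f(x)>-\infty$ for some $\lambda>0,x$; threshold $\lambda_f$ = supremum of such $\lambda$. $v\in\partial_p^\lambda f(x)$ iff $x\in\operatorname{dom}f$ and $f(y)\ge f(x)+\langle v,y-x\rangle-\frac1{2\lambda}\|y-x\|^2$ for all $y\in\mathbb{R}^n$. *)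

theory Defs
  imports "HOL-Analysis.Analysis"
begin

text \<open>Extended-real valued functions f : R^n -> (-inf,+inf], modelled as
  'a::euclidean_space => ereal with f x \<noteq> -\<infinity>.\<close>

definition proper_fun :: "('a \<Rightarrow> ereal) \<Rightarrow> bool" where
  "proper_fun f \<longleftrightarrow> (\<forall>x. f x \<noteq> -\<infinity>) \<and> (\<exists>x. f x < \<infinity>)"

definition lsc_fun :: "('a::topological_space \<Rightarrow> ereal) \<Rightarrow> bool" where
  "lsc_fun f \<longleftrightarrow> (\<forall>x. f x \<le> Liminf (at x) f)"

definition moreau_env :: "('a::real_normed_vector \<Rightarrow> ereal) \<Rightarrow> real \<Rightarrow> 'a \<Rightarrow> ereal" where
  "moreau_env f lam x = (INF y. f y + ereal (1 / (2 * lam) * (norm (y - x))\<^sup>2))"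

definition prox_map :: "('a::real_normed_vector \<Rightarrow> ereal) \<Rightarrow> real \<Rightarrow> 'a \<Rightarrow> 'a set" where
  "prox_map f lam x = {y. \<forall>z. f y + ereal (1 / (2 * lam) * (norm (y - x))\<^sup>2)
                           \<le> f z + ereal (1 / (2 * lam) * (norm (z - x))\<^sup>2)}"

definition prox_bounded :: "('a::real_normed_vector \<Rightarrow> ereal) \<Rightarrow> bool" where
  "prox_bounded f \<longleftrightarrow> (\<exists>lam::real>0. \<exists>x. moreau_env f lam x > -\<infinity>)"

definition prox_threshold :: "('a::real_normed_vector \<Rightarrow> ereal) \<Rightarrow> ereal" where
  "prox_threshold f = Sup {ereal lam | lam. lam > 0 \<and> (\<exists>x. moreau_env f lam x > -\<infinity>)}"

definition prox_subdiff :: "('a::real_inner \<Rightarrow> ereal) \<Rightarrow> real \<Rightarrow> 'a \<Rightarrow> 'a set" where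
  "prox_subdiff f lam x = {v. f x < \<infinity> \<and>
     (\<forall>y. f y \<ge> f x + ereal (inner v (y - x) - 1 / (2 * lam) * (norm (y - x))\<^sup>2))}"

definition firmly_nonexpansive :: "('a::real_inner \<Rightarrow> 'a set) \<Rightarrow> bool" where
  "firmly_nonexpansive T \<longleftrightarrow>
     (\<forall>x y u v. u \<in> T x \<longrightarrow> v \<in> T y \<longrightarrow> (norm (u - v))\<^sup>2 \<le> inner (x - y) (u - v))"

definition monotone_op :: "('a::real_inner \<Rightarrow> 'a set) \<Rightarrow> bool" where
  "monotone_op A \<longleftrightarrow> (\<forall>x y u v. u \<in> A x \<longrightarrow> v \<in> A y \<longrightarrow> inner (x - y) (u - v) \<ge> 0)"

definition maximal_monotone_op :: "('a::real_inner \<Rightarrow> 'a set) \<Rightarrow> bool" where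
  "maximal_monotone_op A \<longleftrightarrow> monotone_op A \<and>
     (\<forall>B. monotone_op B \<and> (\<forall>x. A x \<subseteq> B x) \<longrightarrow> B = A)"

definition convex_efun :: "('a::real_vector \<Rightarrow> ereal) \<Rightarrow> bool" where
  "convex_efun f \<longleftrightarrow> (\<forall>x y t. 0 < t \<and> t < 1 \<longrightarrow>
     f ((1 - t) *\<^sub>R x + t *\<^sub>R y) \<le> ereal (1 - t) * f x + ereal t * f y)"

end

theory Submission
  imports Defs
begin
lemma lsc_ball:
  fixes f :: "'a::metric_space \<Rightarrow> ereal"
  assumes "lsc_fun f" "y < f x"
  shows "\<exists>d>0. \<forall>z. dist z x < d \<longrightarrow> y < f z"
proof -
  have "f x \<le> Liminf (at x) f" using assms(1) unfolding lsc_fun_def by blast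
  then have "eventually (\<lambda>z. y < f z) (at x)" using assms(2) le_Liminf_iff by blast
  then obtain d where d: "d > 0" "\<forall>z. z \<noteq> x \<and> dist z x < d \<longrightarrow> y < f z"
    unfolding eventually_at by blast
  then show ?thesis using assms(2) by (metis)
qed

lemma quad_lower:
  fixes r al be :: real
  assumes "al > 0"
  shows "al * r^2 - be * r \<ge> - (be^2 / (4*al))"
proof -
  have "0 \<le> al * (r - be/(2*al))^2" using assms by simp
  also have "\<dots> = al * r^2 - be * r + be^2/(4*al)" using assms
    by (simp add: power2_eq_square field_simps)
  finally show ?thesis by simp
qed

lemma norm_diff_sq_lower:
  fixes z x :: "'a::real_inner"
  shows "(norm (z - x))^2 \<ge> (norm z)^2 - 2 * norm x * norm z"
proof -
  have "(norm (z - x))^2 = (norm z)^2 - 2 * inner z x + (norm x)^2"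
    by (simp add: power2_norm_eq_inner inner_diff_left inner_diff_right inner_commute)
  moreover have "inner z x \<le> norm x * norm z" using norm_cauchy_schwarz[of z x] by (simp add: mult.commute)
  ultimately show ?thesis using zero_le_power2[of "norm x"] by linarith
qed

lemma argmin_exists:
  fixes h :: "'a::euclidean_space \<Rightarrow> ereal"
  assumes lsc: "\<And>x y. y < h x \<Longrightarrow> \<exists>\<delta>>0. \<forall>z. dist z x < \<delta> \<longrightarrow> y < h z"
  and minor: "\<And>z. ereal (c - a * (norm z)^2 - d * norm z) \<le> h z"
  and ab: "a < b" and b: "0 < b" and fin: "h z0 < \<infinity>"
  shows "\<exists>p. \<forall>z. h p + ereal (b * (norm (p - x))^2) \<le> h z + ereal (b * (norm (z - x))^2)"
proof -
  define \<phi> where "\<phi> z = h z + ereal (b * (norm (z - x))^2)" for z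
  define al where "al = b - a"
  define be where "be = d + 2 * b * norm x"
  have al: "al > 0" using ab al_def by simp
  have lowr: "c + al * (norm z)^2 - be * norm z \<le> c - a * (norm z)^2 - d * norm z + b * (norm (z - x))^2" for z
  proof -
    have "b * (norm (z - x))^2 \<ge> b * ((norm z)^2 - 2 * norm x * norm z)"
      using norm_diff_sq_lower[of z x] b by (intro mult_left_mono) auto
    then show ?thesis unfolding al_def be_def by (simp add: algebra_simps)
  qed
  have low: "ereal (c + al * (norm z)^2 - be * norm z) \<le> \<phi> z" for z
  proof -
    have "ereal (c + al * (norm z)^2 - be * norm z) \<le> ereal (c - a * (norm z)^2 - d * norm z) + ereal (b * (norm (z - x))^2)"
      using lowr[of z] by simp
    also have "\<dots> \<le> \<phi> z" unfolding \<phi>_def using minor[of z] by (intro add_right_mono) auto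
    finally show ?thesis .
  qed
  define L where "L = c - be^2 / (4*al)"
  have lowL: "ereal L \<le> \<phi> z" for z
  proof -
    have "L \<le> c + al * (norm z)^2 - be * norm z" using quad_lower[OF al, of be "norm z"] unfolding L_def by simp
    then show ?thesis using low[of z] by (meson ereal_less_eq(3) order_trans)
  qed
  define m where "m = (INF z. \<phi> z)"
  have mL: "ereal L \<le> m" unfolding m_def using lowL by (simp add: le_INF_iff)
  have mfin: "m < \<infinity>"
  proof -
    have "\<phi> z0 < \<infinity>" unfolding \<phi>_def using fin by simp
    moreover have "m \<le> \<phi> z0" unfolding m_def by (simp add: INF_lower)
    ultimately show ?thesis using order_le_less_trans by blast
  qed
  define m' where "m' = real_of_ereal m"
  have mm': "m = ereal m'" unfolding m'_def using mL mfin by (cases m) auto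
  have "\<forall>n. \<exists>z. \<phi> z < ereal (m' + 1 / Suc n)"
  proof
    fix n
    have "m < ereal (m' + 1 / Suc n)" using mm' by simp
    then show "\<exists>z. \<phi> z < ereal (m' + 1 / Suc n)" unfolding m_def by (simp add: INF_less_iff)
  qed
  then obtain zs where zs: "\<And>n. \<phi> (zs n) < ereal (m' + 1 / Suc n)" by metis
  define K where "K = m' + 1 - c"
  define R where "R = max 1 ((\<bar>be\<bar> + \<bar>K\<bar>) / al)"
  have bnd: "norm (zs n) \<le> R" for n
  proof (rule ccontr)
    assume "\<not> norm (zs n) \<le> R"
    then have r: "norm (zs n) > R" by simp
    define r' where "r' = norm (zs n)"
    have r1: "r' \<ge> 1" using r unfolding R_def r'_def by simp
    have "r' > (\<bar>be\<bar> + \<bar>K\<bar>) / al" using r unfolding R_def r'_def by simp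
    then have "al * r' > \<bar>be\<bar> + \<bar>K\<bar>" using al by (simp add: field_simps)
    then have "al * r' - be \<ge> \<bar>K\<bar>" by linarith
    moreover have "r' * (al * r' - be) \<ge> 1 * (al * r' - be)"
      using r1 \<open>al * r' - be \<ge> \<bar>K\<bar>\<close> by (intro mult_right_mono) auto
    ultimately have "r' * (al * r' - be) \<ge> \<bar>K\<bar>" by simp
    then have A: "al * r'^2 - be * r' \<ge> K" by (simp add: power2_eq_square algebra_simps)
    have "ereal (c + al * r'^2 - be * r') < ereal (m' + 1 / Suc n)"
      using low[of "zs n"] zs[of n] unfolding r'_def by (meson order_le_less_trans)
    then have "c + al * r'^2 - be * r' < m' + 1 / Suc n" by simp
    moreover have "1 / real (Suc n) \<le> 1" by simp
    ultimately show False using A unfolding K_def by linarith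
  qed
  then have "bounded (range zs)" unfolding bounded_iff by blast
  then obtain l r where r: "strict_mono r" and lim: "(zs \<circ> r) \<longlonglongrightarrow> l"
    using bounded_imp_convergent_subsequence by blast
  have "\<phi> l \<le> m"
  proof (rule ccontr)
    assume "\<not> \<phi> l \<le> m"
    then have "ereal m' < \<phi> l" using mm' by simp
    then obtain y' where y'0: "ereal m' < ereal y'" "ereal y' < \<phi> l" using ereal_dense2 by blast
    then have y': "m' < y'" "ereal y' < \<phi> l" by auto
    have hl: "ereal (y' - b * (norm (l - x))^2) < h l"
      using y'(2) unfolding \<phi>_def by (cases "h l") auto
    then obtain t where t: "ereal (y' - b * (norm (l - x))^2) < ereal t" "ereal t < h l"
      using ereal_dense2[OF hl] by blast
    obtain \<delta> where \<delta>: "\<delta> > 0" "\<forall>z. dist z l < \<delta> \<longrightarrow> ereal t < h z" using lsc[OF t(2)] by blast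
    have e1: "eventually (\<lambda>n. dist ((zs \<circ> r) n) l < \<delta>) sequentially"
      using tendstoD[OF lim \<delta>(1)] by simp
    have "(\<lambda>n. b * (norm ((zs \<circ> r) n - x))^2) \<longlonglongrightarrow> b * (norm (l - x))^2"
      by (intro tendsto_intros lim)
    moreover have "b * (norm (l - x))^2 > y' - t" using t(1) by simp
    ultimately have e2: "eventually (\<lambda>n. b * (norm ((zs \<circ> r) n - x))^2 > y' - t) sequentially"
      by (simp add: order_tendstoD(1))
    obtain N where N: "1 / real (Suc N) < y' - m'"
      using y'(1) by (metis diff_gt_0_iff_gt nat_approx_posE)
    have e3: "eventually (\<lambda>n. 1 / real (Suc (r n)) < y' - m') sequentially"
      unfolding eventually_sequentially
    proof (intro exI allI impI)
      fix n assume "n \<ge> N"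
      then have "r n \<ge> N" using r by (meson le_trans seq_suble)
      then have "1 / real (Suc (r n)) \<le> 1 / real (Suc N)" by (simp add: frac_le)
      then show "1 / real (Suc (r n)) < y' - m'" using N by linarith
    qed
    have "eventually (\<lambda>n. dist ((zs \<circ> r) n) l < \<delta> \<and> b * (norm ((zs \<circ> r) n - x))^2 > y' - t \<and> 1 / real (Suc (r n)) < y' - m') sequentially"
      using e1 e2 e3 by (intro eventually_conj)
    then obtain N' where "\<forall>n\<ge>N'. dist ((zs \<circ> r) n) l < \<delta> \<and> b * (norm ((zs \<circ> r) n - x))^2 > y' - t \<and> 1 / real (Suc (r n)) < y' - m'"
      unfolding eventually_sequentially by blast
    then have n: "dist ((zs \<circ> r) N') l < \<delta>" "b * (norm ((zs \<circ> r) N' - x))^2 > y' - t" "1 / real (Suc (r N')) < y' - m'"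
      by auto
    have "ereal t < h (zs (r N'))" using \<delta>(2) n(1) by simp
    then have "ereal y' < \<phi> (zs (r N'))" unfolding \<phi>_def using n(2)
      by (cases "h (zs (r N'))") auto
    moreover have "\<phi> (zs (r N')) < ereal y'"
    proof -
      have "m' + 1 / Suc (r N') < y'" using n(3) by linarith
      then have "ereal (m' + 1 / Suc (r N')) < ereal y'" by simp
      then show ?thesis using zs[of "r N'"] by (rule order.strict_trans[rotated])
    qed
    ultimately show False by simp
  qed
  then have "\<forall>z. \<phi> l \<le> \<phi> z" unfolding m_def by (meson INF_lower UNIV_I order_trans)
  then show ?thesis unfolding \<phi>_def by blast
qed

lemma norm_diff_sq:
  fixes a b :: "'a::real_inner"
  shows "(norm (a - b))^2 = (norm a)^2 - 2 * inner a b + (norm b)^2"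
  by (simp add: power2_norm_eq_inner inner_diff_left inner_diff_right inner_commute)

lemma norm_add_sq:
  fixes a b :: "'a::real_inner"
  shows "(norm (a + b))^2 = (norm a)^2 + 2 * inner a b + (norm b)^2"
  by (simp add: power2_norm_eq_inner inner_add_left inner_add_right inner_commute)

lemma qshift:
  fixes z x v :: "'a::real_inner"
  assumes "lam > 0"
  shows "1/(2*lam) * (norm (z - (x + lam *\<^sub>R v)))^2
       = 1/(2*lam) * (norm (z - x))^2 - inner v (z - x) + lam/2 * (norm v)^2"
proof -
  have "z - (x + lam *\<^sub>R v) = (z - x) - lam *\<^sub>R v" by simp
  then have "(norm (z - (x + lam *\<^sub>R v)))^2 = (norm (z - x))^2 - 2 * lam * inner v (z - x) + lam^2 * (norm v)^2"
    using norm_diff_sq[of "z - x" "lam *\<^sub>R v"] by (simp add: inner_commute power_mult_distrib diff_diff_add)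
  then show ?thesis using assms by (simp add: field_simps power2_eq_square)
qed

locale prox_setting =
  fixes f :: "'a::euclidean_space \<Rightarrow> ereal" and lam :: real and c a0 :: real and x0 :: 'a
  assumes proper: "proper_fun f" and lscf: "lsc_fun f" and lam: "0 < lam"
  and minor: "\<And>y. ereal (c - a0 * (norm (y - x0))^2) \<le> f y"
  and a0: "0 \<le> a0" "a0 < 1/(2*lam)"
begin

lemma fnm: "f y \<noteq> -\<infinity>" using proper unfolding proper_fun_def by blast

lemma fin_pt: obtains y1 where "f y1 < \<infinity>" using proper unfolding proper_fun_def by blast

lemma prox_nonempty: "\<exists>p. p \<in> prox_map f lam x"
proof -
  obtain y1 where y1: "f y1 < \<infinity>" using fin_pt by blast
  have m2: "ereal (c - a0 * (norm x0)^2 - a0 * (norm z)^2 - (2 * a0 * norm x0) * norm z) \<le> f z" for z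
  proof -
    have "norm (z - x0) \<le> norm z + norm x0" by (simp add: norm_triangle_ineq4)
    then have "(norm (z - x0))^2 \<le> (norm z + norm x0)^2" by (simp add: power_mono)
    then have "a0 * (norm (z - x0))^2 \<le> a0 * (norm z + norm x0)^2" using a0 by (simp add: mult_left_mono)
    then have "c - a0 * (norm x0)^2 - a0 * (norm z)^2 - (2 * a0 * norm x0) * norm z \<le> c - a0 * (norm (z - x0))^2"
      by (simp add: power2_sum algebra_simps)
    then show ?thesis using minor[of z] by (meson ereal_less_eq(3) order_trans)
  qed
  have "\<exists>p. \<forall>z. f p + ereal (1/(2*lam) * (norm (p - x))^2) \<le> f z + ereal (1/(2*lam) * (norm (z - x))^2)"
    apply (rule argmin_exists[where h=f and c="c - a0 * (norm x0)^2" and a=a0 and d="2 * a0 * norm x0"])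
    using lsc_ball[OF lscf] m2 a0 lam y1 by auto
  then show ?thesis unfolding prox_map_def by auto
qed

definition pp :: "'a \<Rightarrow> 'a" where "pp x = (SOME p. p \<in> prox_map f lam x)"
lemma pp: "pp x \<in> prox_map f lam x" unfolding pp_def using prox_nonempty someI_ex by metis

lemma env_le: "moreau_env f lam x \<le> f y + ereal (1/(2*lam) * (norm (y - x))^2)"
  unfolding moreau_env_def by (rule INF_lower) simp

lemma env_eq: assumes "p \<in> prox_map f lam x"
  shows "moreau_env f lam x = f p + ereal (1/(2*lam) * (norm (p - x))^2)"
proof (rule antisym)
  show "moreau_env f lam x \<le> f p + ereal (1/(2*lam) * (norm (p - x))^2)" by (rule env_le)
  show "f p + ereal (1/(2*lam) * (norm (p - x))^2) \<le> moreau_env f lam x"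
    unfolding moreau_env_def using assms unfolding prox_map_def by (auto intro: INF_greatest)
qed

definition E :: "'a \<Rightarrow> real" where "E x = real_of_ereal (moreau_env f lam x)"

lemma env_fin: "moreau_env f lam x = ereal (E x)"
proof -
  obtain y1 where y1: "f y1 < \<infinity>" using fin_pt by blast
  have "f y1 + ereal (1/(2*lam) * (norm (y1 - x))^2) < \<infinity>" using y1 by simp
  then have "moreau_env f lam x < \<infinity>" using env_le[of x y1] by (rule order_le_less_trans[rotated])
  moreover have "moreau_env f lam x \<noteq> -\<infinity>" using env_eq[OF pp[of x]] fnm[of "pp x"] by simp
  ultimately show ?thesis unfolding E_def by (cases "moreau_env f lam x") auto
qed

lemma f_prox: assumes "p \<in> prox_map f lam x"
  shows "f p = ereal (E x - 1/(2*lam) * (norm (p - x))^2)"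
  using env_eq[OF assms] env_fin[of x] fnm[of p] by (cases "f p") auto

lemma E_le: "ereal (E x) \<le> f y + ereal (1/(2*lam) * (norm (y - x))^2)"
  using env_le env_fin by metis

lemma subdiff_iff: "v \<in> prox_subdiff f lam x \<longleftrightarrow> x \<in> prox_map f lam (x + lam *\<^sub>R v)"
proof
  assume v: "v \<in> prox_subdiff f lam x"
  then have fx: "f x < \<infinity>" and ineq: "\<And>y. f y \<ge> f x + ereal (inner v (y - x) - 1 / (2 * lam) * (norm (y - x))\<^sup>2)"
    unfolding prox_subdiff_def by auto
  obtain fx' where fx': "f x = ereal fx'" using fx fnm[of x] by (cases "f x") auto
  show "x \<in> prox_map f lam (x + lam *\<^sub>R v)" unfolding prox_map_def
  proof (safe)
    fix z
    have i: "f z \<ge> ereal (fx' + (inner v (z - x) - 1 / (2 * lam) * (norm (z - x))\<^sup>2))"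
      using ineq[of z] fx' by simp
    show "f x + ereal (1 / (2 * lam) * (norm (x - (x + lam *\<^sub>R v)))\<^sup>2)
         \<le> f z + ereal (1 / (2 * lam) * (norm (z - (x + lam *\<^sub>R v)))\<^sup>2)"
      unfolding qshift[OF lam, of z x v] qshift[OF lam, of x x v] fx'
      using i fnm[of z] by (cases "f z") auto
  qed
next
  assume x: "x \<in> prox_map f lam (x + lam *\<^sub>R v)"
  then have ineq: "\<And>z. f x + ereal (1/(2*lam) * (norm (x - x))^2 - inner v (x - x) + lam/2 * (norm v)^2)
         \<le> f z + ereal (1/(2*lam) * (norm (z - x))^2 - inner v (z - x) + lam/2 * (norm v)^2)"
    unfolding prox_map_def qshift[OF lam] by blast
  obtain y1 where y1: "f y1 < \<infinity>" using fin_pt by blast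
  have fx: "f x < \<infinity>" using ineq[of y1] y1 by (cases "f x"; cases "f y1") auto
  obtain fx' where fx': "f x = ereal fx'" using fx fnm[of x] by (cases "f x") auto
  show "v \<in> prox_subdiff f lam x" unfolding prox_subdiff_def
  proof (safe)
    show "f x < \<infinity>" by fact
    fix y
    show "f x + ereal (inner v (y - x) - 1 / (2 * lam) * (norm (y - x))\<^sup>2) \<le> f y"
      using ineq[of y] fx' fnm[of y] by (cases "f y") auto
  qed
qed

lemma AB: "firmly_nonexpansive (prox_map f lam) \<longleftrightarrow> monotone_op (prox_subdiff f lam)"
proof
  assume F: "firmly_nonexpansive (prox_map f lam)"
  show "monotone_op (prox_subdiff f lam)" unfolding monotone_op_def
  proof (intro allI impI)
    fix x y u v assume "u \<in> prox_subdiff f lam x" "v \<in> prox_subdiff f lam y"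
    then have "x \<in> prox_map f lam (x + lam *\<^sub>R u)" "y \<in> prox_map f lam (y + lam *\<^sub>R v)"
      using subdiff_iff by auto
    then have "(norm (x - y))^2 \<le> inner ((x + lam *\<^sub>R u) - (y + lam *\<^sub>R v)) (x - y)"
      using F unfolding firmly_nonexpansive_def by blast
    also have "\<dots> = (norm (x - y))^2 + lam * inner (x - y) (u - v)"
      by (simp add: power2_norm_eq_inner inner_diff_left inner_diff_right inner_add_left inner_commute algebra_simps)
    finally have "0 \<le> lam * inner (x - y) (u - v)" by simp
    then show "0 \<le> inner (x - y) (u - v)" using lam by (simp add: zero_le_mult_iff)
  qed
next
  assume M: "monotone_op (prox_subdiff f lam)"
  show "firmly_nonexpansive (prox_map f lam)" unfolding firmly_nonexpansive_def
  proof (intro allI impI)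
    fix x y u v assume u: "u \<in> prox_map f lam x" and v: "v \<in> prox_map f lam y"
    have "u + lam *\<^sub>R ((1/lam) *\<^sub>R (x - u)) = x" "v + lam *\<^sub>R ((1/lam) *\<^sub>R (y - v)) = y" using lam by auto
    then have "(1/lam) *\<^sub>R (x - u) \<in> prox_subdiff f lam u" "(1/lam) *\<^sub>R (y - v) \<in> prox_subdiff f lam v"
      using subdiff_iff u v by auto
    then have "0 \<le> inner (u - v) ((1/lam) *\<^sub>R (x - u) - (1/lam) *\<^sub>R (y - v))"
      using M unfolding monotone_op_def by blast
    also have "\<dots> = (1/lam) * (inner (x - y) (u - v) - (norm (u - v))^2)"
      by (simp add: power2_norm_eq_inner inner_diff_left inner_diff_right inner_commute algebra_simps)
    finally show "(norm (u - v))^2 \<le> inner (x - y) (u - v)" using lam by (simp add: zero_le_divide_iff)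
  qed
qed

lemma BC: "monotone_op (prox_subdiff f lam) \<longleftrightarrow> maximal_monotone_op (prox_subdiff f lam)"
proof
  assume M: "monotone_op (prox_subdiff f lam)"
  show "maximal_monotone_op (prox_subdiff f lam)" unfolding maximal_monotone_op_def
  proof (intro conjI M allI impI)
    fix B assume B: "monotone_op B \<and> (\<forall>x. prox_subdiff f lam x \<subseteq> B x)"
    have "B x \<subseteq> prox_subdiff f lam x" for x
    proof
      fix w assume w: "w \<in> B x"
      define z where "z = x + lam *\<^sub>R w"
      define p where "p = pp z"
      define a where "a = (1/lam) *\<^sub>R (z - p)"
      have "p + lam *\<^sub>R a = z" unfolding a_def using lam by auto
      then have "a \<in> prox_subdiff f lam p" using subdiff_iff pp[of z] unfolding p_def by auto
      then have "a \<in> B p" using B by blast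
      then have "0 \<le> inner (x - p) (w - a)" using B w unfolding monotone_op_def by blast
      moreover have "x - p = lam *\<^sub>R (a - w)" unfolding a_def z_def using lam by (simp add: algebra_simps)
      ultimately have "0 \<le> lam * inner (a - w) (w - a)" by simp
      then have "0 \<le> - lam * (norm (w - a))^2"
        by (simp add: power2_norm_eq_inner inner_diff_left inner_diff_right inner_commute algebra_simps)
      then have "w = a" using lam by (simp add: mult_le_0_iff)
      then have "x = p" using \<open>x - p = lam *\<^sub>R (a - w)\<close> by simp
      then show "w \<in> prox_subdiff f lam x" using \<open>w = a\<close> \<open>a \<in> prox_subdiff f lam p\<close> by simp
    qed
    then show "B = prox_subdiff f lam" using B by (intro ext) blast
  qed
next
  assume "maximal_monotone_op (prox_subdiff f lam)"
  then show "monotone_op (prox_subdiff f lam)" unfolding maximal_monotone_op_def by blast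
qed

end

lemma sq_convex:
  fixes a b :: "'a::real_inner"
  shows "(norm ((1-t) *\<^sub>R a + t *\<^sub>R b))^2 = (1-t) * (norm a)^2 + t * (norm b)^2 - t * (1-t) * (norm (a - b))^2"
  by (simp add: power2_norm_eq_inner inner_add_left inner_add_right inner_diff_left inner_diff_right
      inner_commute algebra_simps)

lemma sq_convex_le:
  fixes a b :: "'a::real_inner"
  assumes "0 \<le> t" "t \<le> 1"
  shows "(norm ((1-t) *\<^sub>R a + t *\<^sub>R b))^2 \<le> (1-t) * (norm a)^2 + t * (norm b)^2"
proof -
  have "0 \<le> t * (1-t) * (norm (a - b))^2" using assms by simp
  then show ?thesis unfolding sq_convex by linarith
qed

lemma lim_tau:
  fixes A B C :: real
  assumes "\<And>\<tau>. 0 < \<tau> \<Longrightarrow> \<tau> < 1 \<Longrightarrow> B - \<tau> * C \<le> A"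
  shows "B \<le> A"
proof (rule ccontr)
  assume "\<not> B \<le> A"
  then have d: "B - A > 0" by simp
  define \<tau> where "\<tau> = min (1/2) ((B - A) / (2 * (\<bar>C\<bar> + 1)))"
  have t0: "0 < \<tau>" "\<tau> < 1" unfolding \<tau>_def using d by auto
  have "\<tau> * (2 * (\<bar>C\<bar> + 1)) \<le> B - A"
  proof -
    have "\<tau> \<le> (B - A) / (2 * (\<bar>C\<bar> + 1))" unfolding \<tau>_def by simp
    then show ?thesis by (simp add: field_simps)
  qed
  moreover have "\<tau> * C \<le> \<tau> * \<bar>C\<bar>" using t0 by (simp add: mult_left_mono)
  moreover have "\<tau> * \<bar>C\<bar> < \<tau> * (2 * (\<bar>C\<bar> + 1))" using t0 by (simp add: mult_strict_left_mono)
  ultimately have "\<tau> * C < B - A" by linarith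
  with assms[OF t0] show False by linarith
qed

lemma lim_N:
  fixes A B C :: real
  assumes "\<And>N::nat. N \<ge> 1 \<Longrightarrow> B - C / real N \<le> A"
  shows "B \<le> A"
proof (rule ccontr)
  assume "\<not> B \<le> A"
  then have d: "B - A > 0" by simp
  obtain N :: nat where N: "real N > \<bar>C\<bar> / (B - A)" using reals_Archimedean2 by blast
  have N1: "N \<ge> 1" using N d by (metis divide_nonneg_pos abs_ge_zero leI less_one not_less of_nat_0 order.strict_trans2 )
  have "\<bar>C\<bar> < (B - A) * real N" using N d by (simp add: field_simps)
  then have "\<bar>C\<bar> / real N < B - A" using N1 by (simp add: field_simps)
  moreover have "C / real N \<le> \<bar>C\<bar> / real N" using N1 by (simp add: divide_right_mono)
  ultimately show False using assms[OF N1] by linarith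
qed

lemma convex_from_sg:
  fixes E :: "'a::real_inner \<Rightarrow> real"
  assumes sg: "\<And>x z. E z \<ge> E x + inner (G x) (z - x)" and that: "0 \<le> t" "t \<le> 1"
  shows "E ((1-t) *\<^sub>R x + t *\<^sub>R y) \<le> (1-t) * E x + t * E y"
proof -
  define m where "m = (1-t) *\<^sub>R x + t *\<^sub>R y"
  have 1: "E x \<ge> E m + inner (G m) (x - m)" by (rule sg)
  have 2: "E y \<ge> E m + inner (G m) (y - m)" by (rule sg)
  have 3: "(1-t) * inner (G m) (x - m) + t * inner (G m) (y - m) = 0"
  proof -
    have "(1-t) * inner (G m) (x - m) + t * inner (G m) (y - m) = inner (G m) ((1-t) *\<^sub>R (x - m) + t *\<^sub>R (y - m))"
      by (simp add: inner_add_right)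
    also have "(1-t) *\<^sub>R (x - m) + t *\<^sub>R (y - m) = 0" unfolding m_def by (simp add: algebra_simps)
    finally show ?thesis by simp
  qed
  have "(1-t) * E x \<ge> (1-t) * (E m + inner (G m) (x - m))" using 1 that by (simp add: mult_left_mono)
  moreover have "t * E y \<ge> t * (E m + inner (G m) (y - m))" using 2 that by (simp add: mult_left_mono)
  ultimately have "(1-t) * E x + t * E y \<ge> E m + ((1-t) * inner (G m) (x - m) + t * inner (G m) (y - m))"
    by (simp add: algebra_simps)
  then show ?thesis using 3 unfolding m_def by simp
qed

lemma BH_half:
  fixes E :: "'a::real_inner \<Rightarrow> real"
  assumes L: "L > 0"
  and sgx: "\<And>z. E z \<ge> E x + inner gx (z - x)"
  and uy: "\<And>z. E z \<le> E y + inner gy (z - y) + L/2 * (norm (z - y))^2"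
  shows "E y - E x - inner gx (y - x) \<ge> (1/(2*L)) * (norm (gy - gx))^2"
proof -
  define w where "w = y - (1/L) *\<^sub>R (gy - gx)"
  have a: "E w \<ge> E x + inner gx (w - x)" by (rule sgx)
  have b: "E w \<le> E y + inner gy (w - y) + L/2 * (norm (w - y))^2" by (rule uy)
  have wy: "w - y = - (1/L) *\<^sub>R (gy - gx)" unfolding w_def by simp
  have wx: "w - x = (y - x) - (1/L) *\<^sub>R (gy - gx)" unfolding w_def by simp
  have nwy: "(norm (w - y))^2 = (1/L)^2 * (norm (gy - gx))^2"
    unfolding wy using L by (simp add: power_divide power_one_over)
  have "inner gy (w - y) - inner gx (w - x) + L/2 * (norm (w - y))^2
      = - inner gx (y - x) - (1/L) * inner (gy - gx) (gy - gx) + L/2 * ((1/L)^2 * (norm (gy - gx))^2)"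
    unfolding nwy unfolding wy wx by (simp add: inner_diff_left inner_diff_right algebra_simps power_mult_distrib)
  also have "\<dots> = - inner gx (y - x) - (1/(2*L)) * (norm (gy - gx))^2"
    using L by (simp add: power2_norm_eq_inner[symmetric] field_simps power2_eq_square)
  finally show ?thesis using a b by linarith
qed

lemma BH:
  fixes E :: "'a::real_inner \<Rightarrow> real"
  assumes L: "L > 0"
  and sgx: "\<And>z. E z \<ge> E x + inner gx (z - x)"
  and ux: "\<And>z. E z \<le> E x + inner gx (z - x) + L/2 * (norm (z - x))^2"
  and sgy: "\<And>z. E z \<ge> E y + inner gy (z - y)"
  and uy: "\<And>z. E z \<le> E y + inner gy (z - y) + L/2 * (norm (z - y))^2"
  shows "inner (gy - gx) (y - x) \<ge> (1/L) * (norm (gy - gx))^2"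
proof -
  have 1: "E y - E x - inner gx (y - x) \<ge> (1/(2*L)) * (norm (gy - gx))^2" by (rule BH_half[OF L sgx uy])
  have 2: "E x - E y - inner gy (x - y) \<ge> (1/(2*L)) * (norm (gx - gy))^2" by (rule BH_half[OF L sgy ux])
  have "norm (gx - gy) = norm (gy - gx)" by (rule norm_minus_commute)
  moreover have "inner gy (x - y) = - inner gy (y - x)" by (simp add: inner_diff_right)
  ultimately have "inner (gy - gx) (y - x) \<ge> 2 * ((1/(2*L)) * (norm (gy - gx))^2)"
    using 1 2 by (simp add: inner_diff_left algebra_simps)
  then show ?thesis by simp
qed

context prox_setting begin

lemma upper:
  assumes p: "p \<in> prox_map f lam x"
  shows "E z \<le> E x + inner ((1/lam) *\<^sub>R (x - p)) (z - x) + (1/lam)/2 * (norm (z - x))^2"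
proof -
  have "ereal (E z) \<le> f p + ereal (1/(2*lam) * (norm (p - z))^2)" by (rule E_le)
  then have "E z \<le> E x - 1/(2*lam) * (norm (p - x))^2 + 1/(2*lam) * (norm (p - z))^2"
    unfolding f_prox[OF p] by simp
  also have "(norm (p - z))^2 = (norm (p - x))^2 - 2 * inner (p - x) (z - x) + (norm (z - x))^2"
    using norm_diff_sq[of "p - x" "z - x"] by (simp add: diff_diff_eq2)
  finally show ?thesis using lam by (simp add: field_simps inner_diff_left inner_diff_right inner_commute)
qed

lemma E_conv_iff: "convex_efun (moreau_env f lam) \<longleftrightarrow>
   (\<forall>x y t. 0 < t \<and> t < 1 \<longrightarrow> E ((1 - t) *\<^sub>R x + t *\<^sub>R y) \<le> (1-t) * E x + t * E y)"
  unfolding convex_efun_def env_fin by simp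

end

lemma scale_sq:
  fixes w :: "'a::real_normed_vector"
  assumes l: "lam > 0"
  shows "lam * (norm ((1/lam) *\<^sub>R w))^2 = (1/lam) * (norm w)^2"
proof -
  have "norm ((1/lam) *\<^sub>R w) = (1/lam) * norm w" using l by simp
  then show ?thesis using l by (simp add: power2_eq_square field_simps)
qed

context prox_setting begin

lemma ED: assumes fc: "convex_efun f" shows "convex_efun (moreau_env f lam)"
  unfolding E_conv_iff
proof (intro allI impI)
  fix x y :: 'a and t :: real
  assume t: "0 < t \<and> t < 1"
  define p where "p = pp x"
  define r where "r = pp y"
  have fp: "f p = ereal (E x - 1/(2*lam) * (norm (p - x))^2)" unfolding p_def by (rule f_prox[OF pp])
  have fr: "f r = ereal (E y - 1/(2*lam) * (norm (r - y))^2)" unfolding r_def by (rule f_prox[OF pp])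
  define pt where "pt = (1-t) *\<^sub>R p + t *\<^sub>R r"
  define xt where "xt = (1-t) *\<^sub>R x + t *\<^sub>R y"
  have "f pt \<le> ereal (1-t) * f p + ereal t * f r" using fc t unfolding convex_efun_def pt_def by blast
  then have fpt: "f pt \<le> ereal ((1-t) * (E x - 1/(2*lam) * (norm (p - x))^2) + t * (E y - 1/(2*lam) * (norm (r - y))^2))"
    unfolding fp fr by simp
  have "pt - xt = (1-t) *\<^sub>R (p - x) + t *\<^sub>R (r - y)" unfolding pt_def xt_def by (simp add: algebra_simps)
  then have q: "(norm (pt - xt))^2 \<le> (1-t) * (norm (p - x))^2 + t * (norm (r - y))^2"
    using sq_convex_le[of t "p - x" "r - y"] t by simp
  have "ereal (E xt) \<le> f pt + ereal (1/(2*lam) * (norm (pt - xt))^2)" by (rule E_le)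
  also have "\<dots> \<le> ereal ((1-t) * (E x - 1/(2*lam) * (norm (p - x))^2) + t * (E y - 1/(2*lam) * (norm (r - y))^2))
      + ereal (1/(2*lam) * ((1-t) * (norm (p - x))^2 + t * (norm (r - y))^2))"
    using fpt q lam by (intro add_mono) (auto intro: mult_left_mono divide_right_mono)
  also have "\<dots> = ereal ((1-t) * E x + t * E y)"
  proof -
    have "((1-t) * (E x - 1/(2*lam) * (norm (p - x))^2) + t * (E y - 1/(2*lam) * (norm (r - y))^2))
      + (1/(2*lam) * ((1-t) * (norm (p - x))^2 + t * (norm (r - y))^2)) = (1-t) * E x + t * E y"
      by (simp only: ring_distribs) simp
    then show ?thesis by simp
  qed
  finally show "E xt \<le> (1-t) * E x + t * E y" by simp
qed

lemma Econv: assumes "convex_efun (moreau_env f lam)" "0 \<le> t" "t \<le> 1"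
  shows "E ((1 - t) *\<^sub>R x + t *\<^sub>R y) \<le> (1-t) * E x + t * E y"
proof -
  consider "t = 0" | "t = 1" | "0 < t \<and> t < 1" using assms by linarith
  then show ?thesis using assms(1) unfolding E_conv_iff by cases auto
qed

lemma lower_of_conv:
  assumes ec: "convex_efun (moreau_env f lam)" and p: "p \<in> prox_map f lam x"
  shows "E (x + h) \<ge> E x + inner ((1/lam) *\<^sub>R (x - p)) h - (1/lam)/2 * (norm h)^2"
proof -
  have "E ((1 - 1/2) *\<^sub>R (x + h) + (1/2) *\<^sub>R (x - h)) \<le> (1 - 1/2) * E (x + h) + (1/2) * E (x - h)"
    by (rule Econv[OF ec]) auto
  moreover have "(1 - 1/2) *\<^sub>R (x + h) + (1/2::real) *\<^sub>R (x - h) = x"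
    by (simp add: scaleR_add_right scaleR_diff_right flip: scaleR_add_left)
  ultimately have 1: "E x \<le> (E (x + h) + E (x - h)) / 2" by simp
  have 2: "E (x - h) \<le> E x + inner ((1/lam) *\<^sub>R (x - p)) ((x - h) - x) + (1/lam)/2 * (norm ((x - h) - x))^2"
    by (rule upper[OF p])
  have 3: "E (x - h) \<le> E x - inner ((1/lam) *\<^sub>R (x - p)) h + (1/lam)/2 * (norm h)^2"
    using 2 by simp
  have 4: "2 * E x \<le> E (x + h) + E (x - h)" using 1 by simp
  show ?thesis using 4 3 by (simp add: algebra_simps)
qed

lemma sg_of_conv:
  assumes ec: "convex_efun (moreau_env f lam)" and p: "p \<in> prox_map f lam x"
  shows "E z \<ge> E x + inner ((1/lam) *\<^sub>R (x - p)) (z - x)"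
proof -
  define s where "s = (1/lam) *\<^sub>R (x - p)"
  define d where "d = z - x"
  have key: "E z - E x \<ge> inner s d - \<tau> * ((1/lam)/2 * (norm d)^2)" if t: "0 < \<tau>" "\<tau> < 1" for \<tau>
  proof -
    have "E ((1 - \<tau>) *\<^sub>R x + \<tau> *\<^sub>R z) \<le> (1-\<tau>) * E x + \<tau> * E z" by (rule Econv[OF ec]) (use t in auto)
    moreover have "(1 - \<tau>) *\<^sub>R x + \<tau> *\<^sub>R z = x + \<tau> *\<^sub>R d" unfolding d_def by (simp add: algebra_simps)
    ultimately have 1: "E (x + \<tau> *\<^sub>R d) \<le> (1-\<tau>) * E x + \<tau> * E z" by simp
    have 2: "E (x + \<tau> *\<^sub>R d) \<ge> E x + inner s (\<tau> *\<^sub>R d) - (1/lam)/2 * (norm (\<tau> *\<^sub>R d))^2"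
      unfolding s_def by (rule lower_of_conv[OF ec p])
    have "(norm (\<tau> *\<^sub>R d))^2 = \<tau>^2 * (norm d)^2" using t by (simp add: power_mult_distrib)
    then have "\<tau> * (E z - E x) \<ge> \<tau> * (inner s d - \<tau> * ((1/lam)/2 * (norm d)^2))"
      using 1 2 by (simp add: algebra_simps power2_eq_square)
    then show ?thesis using t by simp
  qed
  have "inner s d \<le> E z - E x"
    by (rule lim_tau[where A="E z - E x" and B="inner s d" and C="(1/lam)/2 * (norm d)^2"]) (rule key)
  then show ?thesis unfolding s_def d_def by simp
qed

lemma DA: assumes ec: "convex_efun (moreau_env f lam)" shows "firmly_nonexpansive (prox_map f lam)"
  unfolding firmly_nonexpansive_def
proof (intro allI impI)
  fix x y u v assume u: "u \<in> prox_map f lam x" and v: "v \<in> prox_map f lam y"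
  define gx where "gx = (1/lam) *\<^sub>R (x - u)"
  define gy where "gy = (1/lam) *\<^sub>R (y - v)"
  have L: "1/lam > 0" using lam by simp
  have "inner (gy - gx) (y - x) \<ge> (1/(1/lam)) * (norm (gy - gx))^2"
    apply (rule BH[OF L])
    using sg_of_conv[OF ec u] upper[OF u] sg_of_conv[OF ec v] upper[OF v] unfolding gx_def gy_def by auto
  moreover have "gy - gx = (1/lam) *\<^sub>R ((y - x) - (v - u))" unfolding gx_def gy_def by (simp add: algebra_simps)
  ultimately have "(1/lam) * inner ((y - x) - (v - u)) (y - x) \<ge> lam * (norm ((1/lam) *\<^sub>R ((y - x) - (v - u))))^2"
    by simp
  moreover have "lam * (norm ((1/lam) *\<^sub>R ((y - x) - (v - u))))^2 = (1/lam) * (norm ((y - x) - (v - u)))^2"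
    by (rule scale_sq[OF lam])
  ultimately have "(1/lam) * inner ((y - x) - (v - u)) (y - x) \<ge> (1/lam) * (norm ((y - x) - (v - u)))^2"
    by simp
  then have "inner ((y - x) - (v - u)) (y - x) \<ge> (norm ((y - x) - (v - u)))^2"
    using lam by (simp add: divide_le_cancel)
  then have "(norm (y - x))^2 - inner (v - u) (y - x) \<ge> (norm (y - x))^2 - 2 * inner (y - x) (v - u) + (norm (v - u))^2"
    unfolding norm_diff_sq[of "y - x" "v - u"] by (simp add: inner_diff_left power2_norm_eq_inner)
  then have "(norm (v - u))^2 \<le> inner (y - x) (v - u)" by (simp add: inner_commute)
  moreover have "inner (y - x) (v - u) = inner (x - y) (u - v)"
    by (metis inner_minus_left inner_minus_right minus_diff_eq)
  moreover have "norm (v - u) = norm (u - v)" by (rule norm_minus_commute)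
  ultimately show "(norm (u - v))^2 \<le> inner (x - y) (u - v)" by simp
qed

end

lemma lin4: "(ex::real) \<le> ez + gzxz + k \<Longrightarrow> gx \<le> gz \<Longrightarrow> gzxz = - gz \<Longrightarrow> ex + gx - k \<le> ez"
  by linarith

context prox_setting begin

definition G :: "'a \<Rightarrow> 'a" where "G x = (1/lam) *\<^sub>R (x - pp x)"

lemma fne_single: assumes F: "firmly_nonexpansive (prox_map f lam)" and u: "u \<in> prox_map f lam x"
  shows "u = pp x"
proof -
  have "(norm (u - pp x))^2 \<le> inner (x - x) (u - pp x)" using F u pp[of x] unfolding firmly_nonexpansive_def by blast
  then show ?thesis by simp
qed

lemma nonexp: assumes F: "firmly_nonexpansive (prox_map f lam)"
  shows "norm (pp z - pp x) \<le> norm (z - x)"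
proof -
  have a: "(norm (pp z - pp x))^2 \<le> inner (z - x) (pp z - pp x)" using F pp[of z] pp[of x] unfolding firmly_nonexpansive_def by blast
  also have "\<dots> \<le> norm (z - x) * norm (pp z - pp x)" by (rule norm_cauchy_schwarz)
  finally have b: "norm (pp z - pp x) * norm (pp z - pp x) \<le> norm (z - x) * norm (pp z - pp x)" by (simp add: power2_eq_square)
  show ?thesis
  proof (cases "norm (pp z - pp x) = 0")
    case True then show ?thesis by simp
  next
    case False then have "norm (pp z - pp x) > 0" by simp
    then show ?thesis using b by (simp add: mult_le_cancel_right)
  qed
qed

lemma G_mono: assumes F: "firmly_nonexpansive (prox_map f lam)"
  shows "inner (G z - G x) (z - x) \<ge> 0"
proof -
  have "G z - G x = (1/lam) *\<^sub>R ((z - x) - (pp z - pp x))" unfolding G_def by (simp add: algebra_simps)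
  then have eq: "inner (G z - G x) (z - x) = (1/lam) * ((norm (z - x))^2 - inner (pp z - pp x) (z - x))"
    by (simp add: inner_diff_left power2_norm_eq_inner)
  have "inner (pp z - pp x) (z - x) \<le> norm (pp z - pp x) * norm (z - x)" by (rule norm_cauchy_schwarz)
  also have "\<dots> \<le> norm (z - x) * norm (z - x)" using nonexp[OF F] by (simp add: mult_right_mono)
  finally have "inner (pp z - pp x) (z - x) \<le> (norm (z - x))^2" by (simp add: power2_eq_square)
  then show ?thesis unfolding eq using lam by simp
qed

lemma Lprime: assumes F: "firmly_nonexpansive (prox_map f lam)"
  shows "E z \<ge> E x + inner (G x) (z - x) - (1/lam)/2 * (norm (z - x))^2"
proof -
  have 1: "E x \<le> E z + inner (G z) (x - z) + (1/lam)/2 * (norm (x - z))^2"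
    unfolding G_def by (rule upper[OF pp])
  have 2: "inner (G z) (z - x) \<ge> inner (G x) (z - x)" using G_mono[OF F, of z x] by (simp add: inner_diff_left)
  have 3: "inner (G z) (x - z) = - inner (G z) (z - x)" by (simp add: inner_diff_right)
  have 4: "(norm (x - z))^2 = (norm (z - x))^2" by (simp add: norm_minus_commute)
  show ?thesis using lin4[OF 1[unfolded 4] 2 3] .
qed

lemma SG_of_fne: assumes F: "firmly_nonexpansive (prox_map f lam)"
  shows "E z \<ge> E x + inner (G x) (z - x)"
proof -
  define d where "d = z - x"
  define C where "C = (1/lam)/2 * (norm d)^2"
  have keyN: "inner (G x) d - C / real N \<le> E z - E x" if N: "N \<ge> 1" for N :: nat
  proof -
    define xs where "xs k = x + (real k / real N) *\<^sub>R d" for k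
    have xsN: "xs N = z" unfolding xs_def d_def using N by simp
    have xs0: "xs 0 = x" unfolding xs_def by simp
    have step: "xs (Suc k) - xs k = (1 / real N) *\<^sub>R d" for k
      unfolding xs_def by (simp add: algebra_simps add_divide_distrib flip: scaleR_add_left)
    have tm: "E (xs (Suc k)) - E (xs k) \<ge> inner (G x) ((1 / real N) *\<^sub>R d) - C / (real N)^2" for k
    proof -
      have a: "E (xs (Suc k)) \<ge> E (xs k) + inner (G (xs k)) (xs (Suc k) - xs k) - (1/lam)/2 * (norm (xs (Suc k) - xs k))^2"
        by (rule Lprime[OF F])
      have b: "inner (G (xs k) - G x) d \<ge> 0"
      proof (cases "k = 0")
        case True then show ?thesis using xs0 by simp
      next
        case False
        have "inner (G (xs k) - G x) (xs k - x) \<ge> 0" by (rule G_mono[OF F])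
        moreover have "xs k - x = (real k / real N) *\<^sub>R d" unfolding xs_def by simp
        ultimately have "(real k / real N) * inner (G (xs k) - G x) d \<ge> 0" by simp
        moreover have "real k / real N > 0" using False N by simp
        ultimately show ?thesis by (metis zero_le_mult_iff not_le)
      qed
      have c: "inner (G (xs k)) ((1 / real N) *\<^sub>R d) \<ge> inner (G x) ((1 / real N) *\<^sub>R d)"
        using b N by (simp add: inner_diff_left divide_right_mono)
      have e: "(1/lam)/2 * (norm ((1 / real N) *\<^sub>R d))^2 = C / (real N)^2"
        unfolding C_def using N by (simp add: power_mult_distrib power_divide)
      show ?thesis using a c e unfolding step by linarith
    qed
    have "E z - E x = (\<Sum>k<N. E (xs (Suc k)) - E (xs k))"
      using sum_lessThan_telescope[of "\<lambda>k. E (xs k)" N] xsN xs0 by simp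
    also have "\<dots> \<ge> (\<Sum>k<N. inner (G x) ((1 / real N) *\<^sub>R d) - C / (real N)^2)"
      by (rule sum_mono) (rule tm)
    finally have "E z - E x \<ge> real N * (inner (G x) ((1 / real N) *\<^sub>R d) - C / (real N)^2)" by simp
    also have "real N * (inner (G x) ((1 / real N) *\<^sub>R d) - C / (real N)^2) = inner (G x) d - C / real N"
      using N by (simp add: right_diff_distrib power2_eq_square)
    finally show ?thesis .
  qed
  have "inner (G x) d \<le> E z - E x"
    by (rule lim_N[where A="E z - E x" and B="inner (G x) d" and C=C]) (rule keyN)
  then show ?thesis unfolding d_def by simp
qed

lemma AD: assumes F: "firmly_nonexpansive (prox_map f lam)" shows "convex_efun (moreau_env f lam)"
  unfolding E_conv_iff
proof (intro allI impI)
  fix x y :: 'a and t :: real assume t: "0 < t \<and> t < 1"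
  show "E ((1 - t) *\<^sub>R x + t *\<^sub>R y) \<le> (1-t) * E x + t * E y"
    by (rule convex_from_sg[where G=G]) (use SG_of_fne[OF F] t in auto)
qed

end

context prox_setting begin

definition Fh :: "'a \<Rightarrow> ereal" where
  "Fh y = (SUP x. ereal (E x - 1/(2*lam) * (norm (y - x))^2))"

lemma F_ge: "ereal (E x - 1/(2*lam) * (norm (y - x))^2) \<le> Fh y"
  unfolding Fh_def by (rule SUP_upper) simp

lemma E_le_F: "ereal (E y) \<le> Fh y"
  using F_ge[of y y] by simp

lemma F_nm: "Fh y \<noteq> -\<infinity>"
  using E_le_F[of y] by auto

lemma F_le_f: "Fh y \<le> f y"
  unfolding Fh_def
proof (rule SUP_least)
  fix x
  have "ereal (E x) \<le> f y + ereal (1/(2*lam) * (norm (y - x))^2)" by (rule E_le)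
  then show "ereal (E x - 1/(2*lam) * (norm (y - x))^2) \<le> f y"
    using fnm[of y] by (cases "f y") auto
qed

lemma F_conv:
  assumes ec: "convex_efun (moreau_env f lam)" and t: "0 < t" "t < 1"
  shows "Fh ((1-t) *\<^sub>R y0 + t *\<^sub>R y1) \<le> ereal (1-t) * Fh y0 + ereal t * Fh y1"
  unfolding Fh_def[of "(1-t) *\<^sub>R y0 + t *\<^sub>R y1"]
proof (rule SUP_least)
  fix x
  define yt where "yt = (1-t) *\<^sub>R y0 + t *\<^sub>R y1"
  define x0 where "x0 = x + (y0 - yt)"
  define x1 where "x1 = x + (y1 - yt)"
  have "(1-t) *\<^sub>R x0 + t *\<^sub>R x1 = x" unfolding x0_def x1_def yt_def by (simp add: algebra_simps)
  then have Ex: "E x \<le> (1-t) * E x0 + t * E x1" using Econv[OF ec, of t x0 x1] t by simp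
  have q0: "y0 - x0 = yt - x" "y1 - x1 = yt - x" unfolding x0_def x1_def by (simp_all add: algebra_simps)
  define Q where "Q = 1/(2*lam) * (norm (yt - x))^2"
  have "E x - Q \<le> (1-t) * (E x0 - Q) + t * (E x1 - Q)" using Ex by (simp add: algebra_simps)
  then have "ereal (E x - Q) \<le> ereal (1-t) * ereal (E x0 - Q) + ereal t * ereal (E x1 - Q)" by simp
  also have "\<dots> \<le> ereal (1-t) * Fh y0 + ereal t * Fh y1"
    using F_ge[of x0 y0] F_ge[of x1 y1] t unfolding q0 Q_def
    by (intro add_mono ereal_mult_left_mono) auto
  finally show "ereal (E x - 1/(2*lam) * (norm ((1-t) *\<^sub>R y0 + t *\<^sub>R y1 - x))^2) \<le> ereal (1-t) * Fh y0 + ereal t * Fh y1"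
    unfolding Q_def yt_def .
qed

lemma F_lsc: assumes "y' < Fh y" shows "\<exists>\<delta>>0. \<forall>z. dist z y < \<delta> \<longrightarrow> y' < Fh z"
proof -
  obtain x where x: "y' < ereal (E x - 1/(2*lam) * (norm (y - x))^2)"
    using assms unfolding Fh_def by (auto simp: less_SUP_iff)
  define g where "g z = E x - 1/(2*lam) * (norm (z - x))^2" for z
  obtain w where w: "y' < ereal w" "ereal w < ereal (g y)" using ereal_dense2[OF x[folded g_def]] by blast
  have wg: "w < g y" using w(2) by simp
  have "continuous (at y) g" unfolding g_def by (intro continuous_intros)
  then obtain \<delta> where \<delta>: "\<delta> > 0" "\<forall>z. dist z y < \<delta> \<longrightarrow> dist (g z) (g y) < g y - w"
    unfolding continuous_at_eps_delta using wg by (meson diff_gt_0_iff_gt)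
  have "y' < Fh z" if "dist z y < \<delta>" for z
  proof -
    have "dist (g z) (g y) < g y - w" using \<delta> that by blast
    then have "w < g z" by (simp add: dist_real_def abs_less_iff)
    then have "ereal w < ereal (g z)" by simp
    also have "ereal (g z) \<le> Fh z" unfolding g_def by (rule F_ge)
    finally show ?thesis using w(1) by simp
  qed
  then show ?thesis using \<delta>(1) by blast
qed

end

lemma aux_q: "(k::real) * (1/2 * A + 1/2 * B - 1/4 * C) = (k*A + k*B)/2 - k*(1/4*C)"
  by (simp add: field_simps)

lemma aux_lin: "(e::real) \<le> (a + (e - b))/2 + (c + b)/2 - K \<Longrightarrow> a + c = e \<Longrightarrow> K \<le> 0"
  by argo

context prox_setting begin

lemma key_eq:
  assumes ec: "convex_efun (moreau_env f lam)" and mu: "mu > 0"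
  and pmin: "\<And>z. Fh p + ereal (1/(2*mu) * (norm (p - y))^2) \<le> Fh z + ereal (1/(2*mu) * (norm (z - y))^2)"
  and Fp: "Fh p = ereal Fp"
  shows "f p = ereal Fp"
proof -
  define b where "b = 1/(2*mu)"
  have b: "b > 0" unfolding b_def using mu by simp
  define v where "v = (1/mu) *\<^sub>R (y - p)"
  have FO: "ereal (Fp + inner v (z - p)) \<le> Fh z" for z
  proof (cases "Fh z = \<infinity>")
    case True then show ?thesis by simp
  next
    case False
    then obtain Fz where Fz: "Fh z = ereal Fz" using F_nm[of z] by (cases "Fh z") auto
    have key: "Fz - Fp \<ge> inner v (z - p) - \<tau> * (b * (norm (z - p))^2)" if t: "0 < \<tau>" "\<tau> < 1" for \<tau>
    proof -
      define pt where "pt = (1-\<tau>) *\<^sub>R p + \<tau> *\<^sub>R z"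
      have "Fh pt \<le> ereal (1-\<tau>) * Fh p + ereal \<tau> * Fh z" unfolding pt_def by (rule F_conv[OF ec t])
      then have 1: "Fh pt \<le> ereal ((1-\<tau>) * Fp + \<tau> * Fz)" unfolding Fp Fz by simp
      have 2: "ereal (Fp + b * (norm (p - y))^2) \<le> Fh pt + ereal (b * (norm (pt - y))^2)"
        using pmin[of pt] unfolding Fp b_def by simp
      have "ereal (Fp + b * (norm (p - y))^2) \<le> ereal ((1-\<tau>) * Fp + \<tau> * Fz) + ereal (b * (norm (pt - y))^2)"
        using 2 1 by (meson add_right_mono order_trans)
      then have 3: "Fp + b * (norm (p - y))^2 \<le> (1-\<tau>) * Fp + \<tau> * Fz + b * (norm (pt - y))^2" by simp
      have 4: "(norm (pt - y))^2 = (norm (p - y))^2 + 2 * \<tau> * inner (p - y) (z - p) + \<tau>^2 * (norm (z - p))^2"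
      proof -
        have e: "pt - y = (p - y) + \<tau> *\<^sub>R (z - p)" unfolding pt_def by (simp add: algebra_simps)
        have "(norm ((p - y) + \<tau> *\<^sub>R (z - p)))^2 = (norm (p - y))^2 + 2 * inner (p - y) (\<tau> *\<^sub>R (z - p)) + (norm (\<tau> *\<^sub>R (z - p)))^2"
          by (rule norm_add_sq)
        also have "\<dots> = (norm (p - y))^2 + 2 * \<tau> * inner (p - y) (z - p) + \<tau>^2 * (norm (z - p))^2"
          by (simp add: power_mult_distrib)
        finally show ?thesis unfolding e .
      qed
      have 5: "0 \<le> \<tau> * ((Fz - Fp) + 2 * b * inner (p - y) (z - p) + \<tau> * (b * (norm (z - p))^2))"
        using 3 unfolding 4 by (simp add: algebra_simps power2_eq_square)
      have 6: "inner v (z - p) = - 2 * b * inner (p - y) (z - p)"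
        unfolding v_def b_def using mu by (simp add: inner_diff_left field_simps)
      have "0 \<le> (Fz - Fp) + 2 * b * inner (p - y) (z - p) + \<tau> * (b * (norm (z - p))^2)"
        using 5 t by (simp add: zero_le_mult_iff)
      then show ?thesis unfolding 6 by linarith
    qed
    have "inner v (z - p) \<le> Fz - Fp"
      by (rule lim_tau[where A="Fz - Fp" and B="inner v (z - p)" and C="b * (norm (z - p))^2"]) (rule key)
    then show ?thesis unfolding Fz by simp
  qed
  define x' where "x' = p + lam *\<^sub>R v"
  define q where "q z = 1/(2*lam) * (norm (z - x'))^2" for z
  have qz: "q z = 1/(2*lam) * (norm (z - p))^2 - inner v (z - p) + lam/2 * (norm v)^2" for z
    unfolding q_def x'_def by (rule qshift[OF lam])
  have qp: "q p = lam/2 * (norm v)^2" using qz[of p] by simp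
  have Mp: "ereal (Fp + q p) \<le> Fh z + ereal (q z)" for z
  proof -
    have "ereal (Fp + q p) \<le> ereal (Fp + inner v (z - p)) + ereal (q z)"
      unfolding qz qp using lam by simp
    also have "\<dots> \<le> Fh z + ereal (q z)" using FO[of z] by (rule add_right_mono)
    finally show ?thesis .
  qed
  have Ex: "ereal (E x') \<le> Fh z + ereal (q z)" for z
  proof -
    have "ereal (E x' - q z) \<le> Fh z" unfolding q_def by (rule F_ge)
    then show ?thesis using F_nm[of z] by (cases "Fh z") auto
  qed
  define r where "r = pp x'"
  have fr: "f r = ereal (E x' - q r)" unfolding r_def q_def by (rule f_prox[OF pp])
  have Fr: "Fh r = ereal (E x' - q r)"
  proof (rule antisym)
    show "Fh r \<le> ereal (E x' - q r)" using F_le_f[of r] fr by simp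
    show "ereal (E x' - q r) \<le> Fh r" unfolding q_def by (rule F_ge)
  qed
  have "ereal (Fp + q p) \<le> ereal (E x')" using Mp[of r] unfolding Fr by simp
  moreover have "ereal (E x') \<le> ereal (Fp + q p)" using Ex[of p] unfolding Fp by simp
  ultimately have Fpe: "Fp + q p = E x'" by simp
  define m where "m = (1 - 1/2) *\<^sub>R p + (1/2::real) *\<^sub>R r"
  have "Fh m \<le> ereal (1 - 1/2) * Fh p + ereal (1/2) * Fh r" unfolding m_def by (rule F_conv[OF ec]) auto
  then have Fm: "Fh m \<le> ereal ((Fp + (E x' - q r)) / 2)" unfolding Fp Fr by (simp add: add_divide_distrib)
  have h: "(1/2::real) *\<^sub>R x' + (1/2::real) *\<^sub>R x' = x'"
  proof -
    have "(1/2::real) *\<^sub>R x' + (1/2::real) *\<^sub>R x' = (1/2 + 1/2::real) *\<^sub>R x'" by (rule scaleR_add_left[symmetric])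
    then show ?thesis by simp
  qed
  have "m - x' = (1 - 1/2) *\<^sub>R p + (1/2::real) *\<^sub>R r - ((1/2::real) *\<^sub>R x' + (1/2::real) *\<^sub>R x')"
    unfolding m_def h ..
  also have "\<dots> = (1 - 1/2) *\<^sub>R (p - x') + (1/2::real) *\<^sub>R (r - x')" by (simp add: algebra_simps)
  finally have "m - x' = (1 - 1/2) *\<^sub>R (p - x') + (1/2::real) *\<^sub>R (r - x')" .
  then have nm: "(norm (m - x'))^2 = (1/2) * (norm (p - x'))^2 + (1/2) * (norm (r - x'))^2 - (1/4) * (norm (p - r))^2"
    using sq_convex[of "1/2" "p - x'" "r - x'"] by simp
  have "ereal (E x') \<le> Fh m + ereal (q m)" by (rule Ex)
  also have "\<dots> \<le> ereal ((Fp + (E x' - q r)) / 2) + ereal (q m)" using Fm by (rule add_right_mono)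
  finally have "E x' \<le> (Fp + (E x' - q r)) / 2 + q m" by simp
  then have "E x' \<le> (Fp + (E x' - q r)) / 2 + (q p + q r) / 2 - 1/(2*lam) * ((1/4) * (norm (p - r))^2)"
  proof -
    have "q m = (q p + q r) / 2 - 1/(2*lam) * ((1/4) * (norm (p - r))^2)"
      unfolding q_def nm by (rule aux_q)
    then show ?thesis using \<open>E x' \<le> (Fp + (E x' - q r)) / 2 + q m\<close> by linarith
  qed
  then have "1/(2*lam) * ((1/4) * (norm (p - r))^2) \<le> 0" using Fpe by (rule aux_lin)
  then have "(norm (p - r))^2 \<le> 0" using lam by (simp add: mult_le_0_iff divide_le_0_iff)
  then have "p = r" by simp
  then show ?thesis using fr Fpe by simp
qed

end

lemma aux_D:
  fixes D A B mu :: real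
  assumes mu: "mu > 0" and h: "D^2/(2*mu) \<le> A + B*D"
  shows "D^2 \<le> 4*mu*A + 4*mu^2*B^2"
proof -
  have 1: "D^2 \<le> 2*mu*A + 2*mu*B*D" using h mu by (simp add: pos_divide_le_eq algebra_simps)
  have "0 \<le> (D - 2*mu*B)^2" by simp
  then have 2: "4*mu*B*D \<le> D^2 + 4*mu^2*B^2" by (simp add: power2_eq_square algebra_simps)
  show ?thesis using 1 2 by argo
qed

lemma aux_mu:
  fixes A B mu \<delta> :: real
  assumes A: "A \<ge> 0" and d: "\<delta> > 0" and mu: "mu = min 1 (\<delta>^2 / (8 * (A + B^2 + 1)))"
  shows "mu > 0" "4*mu*A + 4*mu^2*B^2 < \<delta>^2"
proof -
  have pos: "A + B^2 + 1 > 0" using A by (simp add: add_nonneg_pos)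
  show m0: "mu > 0" using mu d pos by simp
  have m1: "mu \<le> 1" using mu by simp
  have "mu \<le> \<delta>^2 / (8 * (A + B^2 + 1))" using mu by simp
  then have m2: "mu * (8 * (A + B^2 + 1)) \<le> \<delta>^2" using pos by (simp add: pos_le_divide_eq)
  have a: "mu^2 * B^2 \<le> mu * B^2" using m0 m1 by (simp add: power2_eq_square mult_right_mono)
  have b: "8*mu + 8*(mu*A) + 8*(mu*B^2) \<le> \<delta>^2" using m2 by (simp add: algebra_simps)
  have c: "mu*A \<ge> 0" "mu*B^2 \<ge> 0" using m0 A by simp_all
  have "4*(mu*A) + 4*(mu^2*B^2) < \<delta>^2" using a b c m0 by linarith
  then show "4*mu*A + 4*mu^2*B^2 < \<delta>^2" by (simp add: algebra_simps)
qed

context prox_setting begin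

lemma f_le_F: assumes ec: "convex_efun (moreau_env f lam)" shows "f y \<le> Fh y"
proof (rule ccontr)
  assume "\<not> f y \<le> Fh y"
  then have lt: "Fh y < f y" by simp
  then have "Fh y < \<infinity>" by auto
  then obtain Fy where Fy: "Fh y = ereal Fy" using F_nm[of y] by (cases "Fh y") auto
  obtain \<delta> where \<delta>: "\<delta> > 0" "\<forall>z. dist z y < \<delta> \<longrightarrow> Fh y < f z" using lsc_ball[OF lscf lt] by blast
  have F: "firmly_nonexpansive (prox_map f lam)" by (rule DA[OF ec])
  define A where "A = Fy - E y"
  have A0: "A \<ge> 0" using E_le_F[of y] unfolding Fy A_def by simp
  define B where "B = norm (G y)"
  define mu where "mu = min 1 (\<delta>^2 / (8 * (A + B^2 + 1)))"
  have mu0: "mu > 0" and mud: "4*mu*A + 4*mu^2*B^2 < \<delta>^2" using aux_mu[OF A0 \<delta>(1) mu_def] by auto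
  have minor: "ereal (E 0 - 0 * (norm z)^2 - norm (G 0) * norm z) \<le> Fh z" for z
  proof -
    have "E z \<ge> E 0 + inner (G 0) (z - 0)" by (rule SG_of_fne[OF F])
    moreover have "inner (G 0) (- z) \<le> norm (G 0) * norm (- z)" by (rule norm_cauchy_schwarz)
    ultimately have "E 0 - 0 * (norm z)^2 - norm (G 0) * norm z \<le> E z" by simp
    then have "ereal (E 0 - 0 * (norm z)^2 - norm (G 0) * norm z) \<le> ereal (E z)" by simp
    also have "\<dots> \<le> Fh z" by (rule E_le_F)
    finally show ?thesis .
  qed
  have "\<exists>p. \<forall>z. Fh p + ereal (1/(2*mu) * (norm (p - y))^2) \<le> Fh z + ereal (1/(2*mu) * (norm (z - y))^2)"
    apply (rule argmin_exists[where h=Fh and c="E 0" and a=0 and d="norm (G 0)"])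
    using F_lsc apply blast
    using minor apply blast
    using mu0 apply simp
    using mu0 apply simp
    using \<open>Fh y < \<infinity>\<close> apply assumption
    done
  then obtain p where pmin: "\<And>z. Fh p + ereal (1/(2*mu) * (norm (p - y))^2) \<le> Fh z + ereal (1/(2*mu) * (norm (z - y))^2)"
    by blast
  have pm: "Fh p + ereal (1/(2*mu) * (norm (p - y))^2) \<le> ereal Fy" using pmin[of y] unfolding Fy by simp
  then have "Fh p < \<infinity>" by (cases "Fh p") auto
  then obtain Fp where Fp: "Fh p = ereal Fp" using F_nm[of p] by (cases "Fh p") auto
  have i: "Fp + 1/(2*mu) * (norm (p - y))^2 \<le> Fy" using pm unfolding Fp by simp
  have ii: "Fp \<ge> E y - B * norm (p - y)"
  proof -
    have "ereal (E p) \<le> ereal Fp" using E_le_F[of p] unfolding Fp .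
    then have 1: "E p \<le> Fp" by simp
    have 2: "E p \<ge> E y + inner (G y) (p - y)" by (rule SG_of_fne[OF F])
    have c1: "inner (G y) (y - p) \<le> norm (G y) * norm (y - p)" by (rule norm_cauchy_schwarz)
    have c2: "norm (y - p) = norm (p - y)" by (rule norm_minus_commute)
    have c3: "inner (G y) (y - p) = - inner (G y) (p - y)" by (simp add: inner_diff_right)
    have 3: "inner (G y) (p - y) \<ge> - B * norm (p - y)" using c1[unfolded c2] c3 unfolding B_def by linarith
    show ?thesis using 1 2 3 by linarith
  qed
  define D where "D = norm (p - y)"
  have "D^2/(2*mu) \<le> A + B*D" using i ii unfolding A_def D_def by (simp add: algebra_simps)
  then have "D^2 \<le> 4*mu*A + 4*mu^2*B^2" by (rule aux_D[OF mu0])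
  then have "D^2 < \<delta>^2" using mud by linarith
  then have "D < \<delta>" using \<delta>(1) by (simp add: power_less_imp_less_base)
  then have "Fh y < f p" using \<delta>(2) unfolding D_def by (simp add: dist_norm)
  moreover have "f p = ereal Fp" by (rule key_eq[OF ec mu0 pmin Fp])
  ultimately have "Fy < Fp" unfolding Fy by simp
  moreover have "0 \<le> 1/(2*mu) * (norm (p - y))^2" using mu0 by simp
  ultimately show False using i by linarith
qed

lemma DE: assumes ec: "convex_efun (moreau_env f lam)" shows "convex_efun f"
proof -
  have eq: "f y = Fh y" for y by (rule antisym[OF f_le_F[OF ec] F_le_f])
  show ?thesis unfolding convex_efun_def
  proof (intro allI impI)
    fix x y :: 'a and t :: real assume t: "0 < t \<and> t < 1"
    show "f ((1 - t) *\<^sub>R x + t *\<^sub>R y) \<le> ereal (1 - t) * f x + ereal t * f y"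
    proof -
      have 1: "Fh ((1 - t) *\<^sub>R x + t *\<^sub>R y) \<le> ereal (1 - t) * Fh x + ereal t * Fh y"
        using F_conv[OF ec] t by blast
      have e1: "f ((1 - t) *\<^sub>R x + t *\<^sub>R y) = Fh ((1 - t) *\<^sub>R x + t *\<^sub>R y)" by (rule eq)
      have e2: "f x = Fh x" by (rule eq)
      have e3: "f y = Fh y" by (rule eq)
      show ?thesis using 1 by (subst e1, subst e2, subst e3)
    qed
  qed
qed

end

theorem mainTheorem3:
  fixes f :: "'a::euclidean_space \<Rightarrow> ereal" and lam :: real
  assumes "proper_fun f" and "lsc_fun f" and "prox_bounded f"
    and "prox_threshold f > 0"
    and "0 < lam" and "ereal lam < prox_threshold f"
  shows "(firmly_nonexpansive (prox_map f lam) \<longleftrightarrow> monotone_op (prox_subdiff f lam))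
       \<and> (monotone_op (prox_subdiff f lam) \<longleftrightarrow> maximal_monotone_op (prox_subdiff f lam))
       \<and> (maximal_monotone_op (prox_subdiff f lam) \<longleftrightarrow> convex_efun (moreau_env f lam))
       \<and> (convex_efun (moreau_env f lam) \<longleftrightarrow> convex_efun f)"
proof -
  have "\<exists>y\<in>{ereal l | l. l > 0 \<and> (\<exists>x. moreau_env f l x > -\<infinity>)}. ereal lam < y"
    using assms(6) unfolding prox_threshold_def by (simp add: less_Sup_iff)
  then obtain l x0 where l: "lam < l" "0 < l" "moreau_env f l x0 > -\<infinity>" by auto
  obtain c where c: "ereal c < moreau_env f l x0" using ereal_dense2[OF l(3)] by blast
  have minor: "ereal (c - 1/(2*l) * (norm (y - x0))^2) \<le> f y" for y
  proof -
    have "moreau_env f l x0 \<le> f y + ereal (1/(2*l) * (norm (y - x0))^2)"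
      unfolding moreau_env_def by (rule INF_lower) simp
    then have "ereal c < f y + ereal (1/(2*l) * (norm (y - x0))^2)" using c by simp
    moreover have "f y \<noteq> -\<infinity>" using assms(1) unfolding proper_fun_def by blast
    ultimately show ?thesis by (cases "f y") auto
  qed
  have a0: "0 \<le> 1/(2*l)" "1/(2*l) < 1/(2*lam)" using l assms(5) by (auto simp: frac_less2)
  interpret P: prox_setting f lam c "1/(2*l)" x0
    by unfold_locales (use assms minor a0 in auto)
  have cd: "maximal_monotone_op (prox_subdiff f lam) \<longleftrightarrow> convex_efun (moreau_env f lam)"
    using P.AB P.BC P.AD P.DA by blast
  have de: "convex_efun (moreau_env f lam) \<longleftrightarrow> convex_efun f" using P.DE P.ED by blast
  show ?thesis using P.AB P.BC cd de by blast
qed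

end
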